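(* Let $\mathbb{X},\mathbb{Y}$ be real Banach spaces, $x\in S_{\mathbb{X}}$, $y\in S_{\mathbb{Y}}$. Then: (i) If $(x,y)$ is a CPP then $(x,y)$ is a weak CPP; the converse fails in general: in $\ell_\infty^2$, $((1,1),(1,-1))$ is a weak CPP but not a CPP. (ii) If $\mathbb{H}$ is a real Hilbert space, then for any $x,y\in S_{\mathbb{H}}$ the pair $(x,y)$ is a CPP, and $(r,1)$ is a CPP constant for it for every $r>0$. (iii) For every $x\in S_{\mathbb{X}}$, $(x,x)$ is a weak CPP; but $(x,x)$ need not be a CPP: in $\ell_\infty^2$, $((1,1),(1,1))$ is not a CPP. (iv) A pair need not be a weak CPP: in $\ell_\infty^2$, $((1,0),(1,1/2))$ is a weak CPP, but $((1,0),(1,1))$ is not a weak CPP. (v) If $(r_0,\mu_0)$ is a weak CPP constant (respectively, a CPP constant) for $(x,y)$, then $(r,\mu)$ is a weak CPP constant (respectively, a CPP constant) for $(x,y)$ for all $0<r\le r_0$ and $0<\mu\le\mu_0$. (vi) If $(x,y)$ is a CPP and $x$ is not an extreme point of $B_{\mathbb{X}}$, then $y$ is not an extreme point of $B_{\mathbb{Y}}$. The converse fails: in $\ell_\infty^2$, $((1,1),(1,0))$ is a CPP, $(1,0)$ is not an extreme point of $B_{\ell_\infty^2}$, while $(1,1)$ is an extreme point of $B_{\ell_\infty^2}$.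
   Context: All Banach spaces are real and of dimension greater than $1$. $B_{\mathbb{X}}$ and $S_{\mathbb{X}}$ denote the closed unit ball and unit sphere; $B(x,r)=\{u:\|u-x\|<r\}$. For $x,y\in\mathbb{X}$, $x\perp_B y$ (Birkhoff–James orthogonality) means $\|x+\lambda y\|\ge\|x\|$ for all $\lambda\in\mathbb{R}$, and $x^{\perp}=\{y\in\mathbb{X}: x\perp_B y\}$. For $x\in S_{\mathbb{X}}$, $y\in S_{\mathbb{Y}}$: $(x,y)$ is a weak CPP (weakly compatible point pair) if there exist $z\in x^\perp\cap S_{\mathbb{X}}$, $w\in y^\perp\cap S_{\mathbb{Y}}$ and constants $r>0,\mu>0$ such that for all $a,b\in\mathbb{R}$, $ax+bz\in B(x,r)\cap S_{\mathbb{X}}$ implies $\|ay+b\mu w\|\le 1$; any such $(r,\mu)$ is a weak CPP constant for $(x,y)$. $(x,y)$ is a CPP (compatible point pair) if there exist $r>0,\mu>0$ such that for all $z\in x^\perp\cap S_{\mathbb{X}}$, all $w\in y^\perp\cap S_{\mathbb{Y}}$ and all $a,b\in\mathbb{R}$, $ax+bz\in B(x,r)\cap S_{\mathbb{X}}$ implies $\|ay+b\mu w\|\le1$; any such $(r,\mu)$ is a CPP constant for $(x,y)$. $\ell_\infty^2$ is $\mathbb{R}^2$ with the max norm. *)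

theory Defs
  imports "HOL-Analysis.Analysis"
begin

text \<open>All notions are stated for a real vector space together with an explicit norm
  function N (for genuine normed spaces N = norm; for l_infinity^2 we use the max norm
  on real * real).\<close>

definition bj_orth :: "('a::real_vector \<Rightarrow> real) \<Rightarrow> 'a \<Rightarrow> 'a \<Rightarrow> bool" where
  "bj_orth N x y \<longleftrightarrow> (\<forall>l::real. N (x + l *\<^sub>R y) \<ge> N x)"

definition weak_cpp_const ::
  "('a::real_vector \<Rightarrow> real) \<Rightarrow> ('b::real_vector \<Rightarrow> real) \<Rightarrow> 'a \<Rightarrow> 'b \<Rightarrow> real \<Rightarrow> real \<Rightarrow> bool" where
  "weak_cpp_const NX NY x y r m \<longleftrightarrow> r > 0 \<and> m > 0 \<and>
     (\<exists>z w. bj_orth NX x z \<and> NX z = 1 \<and> bj_orth NY y w \<and> NY w = 1 \<and>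
        (\<forall>a b::real. NX (a *\<^sub>R x + b *\<^sub>R z - x) < r \<and> NX (a *\<^sub>R x + b *\<^sub>R z) = 1
            \<longrightarrow> NY (a *\<^sub>R y + (b * m) *\<^sub>R w) \<le> 1))"

definition weak_cpp ::
  "('a::real_vector \<Rightarrow> real) \<Rightarrow> ('b::real_vector \<Rightarrow> real) \<Rightarrow> 'a \<Rightarrow> 'b \<Rightarrow> bool" where
  "weak_cpp NX NY x y \<longleftrightarrow> (\<exists>r m. weak_cpp_const NX NY x y r m)"

definition cpp_const ::
  "('a::real_vector \<Rightarrow> real) \<Rightarrow> ('b::real_vector \<Rightarrow> real) \<Rightarrow> 'a \<Rightarrow> 'b \<Rightarrow> real \<Rightarrow> real \<Rightarrow> bool" where
  "cpp_const NX NY x y r m \<longleftrightarrow> r > 0 \<and> m > 0 \<and>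
     (\<forall>z w. bj_orth NX x z \<and> NX z = 1 \<and> bj_orth NY y w \<and> NY w = 1 \<longrightarrow>
        (\<forall>a b::real. NX (a *\<^sub>R x + b *\<^sub>R z - x) < r \<and> NX (a *\<^sub>R x + b *\<^sub>R z) = 1
            \<longrightarrow> NY (a *\<^sub>R y + (b * m) *\<^sub>R w) \<le> 1))"

definition cpp ::
  "('a::real_vector \<Rightarrow> real) \<Rightarrow> ('b::real_vector \<Rightarrow> real) \<Rightarrow> 'a \<Rightarrow> 'b \<Rightarrow> bool" where
  "cpp NX NY x y \<longleftrightarrow> (\<exists>r m. cpp_const NX NY x y r m)"

definition linf2_norm :: "real \<times> real \<Rightarrow> real" where
  "linf2_norm p = max \<bar>fst p\<bar> \<bar>snd p\<bar>"

definition dim_gt_one :: "'a::real_vector itself \<Rightarrow> bool" where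
  "dim_gt_one (T :: 'a itself) \<longleftrightarrow> (\<exists>u v :: 'a. u \<noteq> v \<and> independent {u, v})"

end

theory Submission
  imports Defs
begin

lemma bj_exists:
  fixes y u :: "'a::real_normed_vector"
  assumes ny: "norm y = 1" and nu: "\<forall>k. u \<noteq> k *\<^sub>R y"
  shows "\<exists>w. bj_orth norm y w \<and> norm w = 1"
proof -
  define \<phi> where "\<phi> t = norm (y + t *\<^sub>R u)" for t
  define A where "A = {(1 - \<phi>(-s))/s | s. s > 0}"
  have key: "t*(1 - \<phi>(-s)) \<le> s*(\<phi> t - 1)" if s: "s>0" and t: "t>0" for s t
  proof -
    have eq: "(s+t) *\<^sub>R y = t *\<^sub>R (y - s *\<^sub>R u) + s *\<^sub>R (y + t *\<^sub>R u)"
      by (simp add: algebra_simps)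
    have "s+t = norm ((s+t) *\<^sub>R y)" using s t ny by simp
    also have "\<dots> \<le> norm (t *\<^sub>R (y - s *\<^sub>R u)) + norm (s *\<^sub>R (y + t *\<^sub>R u))"
      unfolding eq by (rule norm_triangle_ineq)
    also have "\<dots> = t * \<phi> (-s) + s * \<phi> t" using s t by (simp add: \<phi>_def)
    finally show ?thesis by (simp add: algebra_simps)
  qed
  have Ane: "A \<noteq> {}" unfolding A_def using zero_less_one by blast
  have Abd: "x \<le> \<phi> 1 - 1" if xA: "x \<in> A" for x
  proof -
    obtain s where s: "s>0" "x = (1 - \<phi>(-s))/s" using xA A_def by auto
    have "1*(1 - \<phi>(-s)) \<le> s*(\<phi> 1 - 1)" using key[OF s(1), of 1] by simp
    hence "s * x \<le> s * (\<phi> 1 - 1)" using s by simp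
    thus ?thesis using s(1) by (simp add: mult_le_cancel_left_pos)
  qed
  have bdd: "bdd_above A" by (rule bdd_aboveI[of _ "\<phi> 1 - 1"]) (rule Abd)
  define c where "c = Sup A"
  have ge: "\<phi> t \<ge> 1 + c*t" for t
  proof (cases "t > 0")
    case True
    have "c \<le> (\<phi> t - 1)/t" unfolding c_def
    proof (rule cSup_least[OF Ane])
      fix x assume "x \<in> A"
      then obtain s where s: "s>0" "x = (1 - \<phi>(-s))/s" using A_def by auto
      have sx: "s * x = 1 - \<phi> (-s)" using s by (simp add: field_simps)
      have "s * (t * x) = t * (1 - \<phi> (-s))" by (metis sx mult.left_commute)
      hence "s * (t * x) \<le> s * (\<phi> t - 1)" using key[OF s(1) True] by linarith
      hence "t * x \<le> \<phi> t - 1" using s(1) by (simp add: mult_le_cancel_left_pos)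
      thus "x \<le> (\<phi> t - 1)/t" using True by (simp add: divide_simps mult.commute)
    qed
    thus ?thesis using True by (simp add: divide_simps mult.commute)
  next
    case False
    show ?thesis
    proof (cases "t = 0")
      case True then show ?thesis by (simp add: \<phi>_def ny)
    next
      case f2: False
      hence tn: "t < 0" using False by simp
      have "(1 - \<phi> (-(-t)))/(-t) \<in> A" unfolding A_def using tn by (intro CollectI exI[of _ "-t"]) auto
      hence "(1 - \<phi> t)/(-t) \<le> c" unfolding c_def using cSup_upper[OF _ bdd] by simp
      thus ?thesis using tn by (simp add: divide_simps mult.commute)
    qed
  qed
  have gen: "norm (\<mu> *\<^sub>R y + t *\<^sub>R u) \<ge> \<mu> + c*t" for \<mu> t
  proof (cases "\<mu> > 0")
    case True
    have "\<mu> *\<^sub>R y + t *\<^sub>R u = \<mu> *\<^sub>R (y + (t/\<mu>) *\<^sub>R u)" using True by (simp add: algebra_simps)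
    hence "norm (\<mu> *\<^sub>R y + t *\<^sub>R u) = \<mu> * \<phi> (t/\<mu>)" using True by (simp add: \<phi>_def)
    also have "\<dots> \<ge> \<mu> * (1 + c*(t/\<mu>))" using ge[of "t/\<mu>"] True by simp
    finally show ?thesis using True by (simp add: algebra_simps)
  next
    case False
    have eq: "\<mu> *\<^sub>R y + t *\<^sub>R u = (y + t *\<^sub>R u) - (1-\<mu>) *\<^sub>R y" by (simp add: algebra_simps)
    have "norm (y + t *\<^sub>R u) - norm ((1-\<mu>) *\<^sub>R y) \<le> norm (\<mu> *\<^sub>R y + t *\<^sub>R u)"
      unfolding eq by (rule norm_triangle_ineq2)
    moreover have "norm ((1-\<mu>) *\<^sub>R y) = 1 - \<mu>" using False ny by simp
    ultimately show ?thesis using ge[of t] unfolding \<phi>_def by linarith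
  qed
  define w0 where "w0 = u - c *\<^sub>R y"
  have w0nz: "w0 \<noteq> 0" using nu unfolding w0_def by auto
  have bj0: "norm (y + l *\<^sub>R w0) \<ge> 1" for l
  proof -
    have "y + l *\<^sub>R w0 = (1 - l*c) *\<^sub>R y + l *\<^sub>R u" unfolding w0_def by (simp add: algebra_simps)
    moreover have "(1 - l*c) + c*l = 1" by (simp add: algebra_simps)
    ultimately show ?thesis using gen[of "1 - l*c" l] by simp
  qed
  define w where "w = (1/norm w0) *\<^sub>R w0"
  have "norm w = 1" unfolding w_def using w0nz by simp
  moreover have "bj_orth norm y w" unfolding bj_orth_def w_def ny
    using bj0 by (simp add: scaleR_scaleR)
  ultimately show ?thesis by blast
qed

lemma other_vec:
  fixes y :: "'a::real_vector"
  assumes "dim_gt_one TYPE('a)"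
  shows "\<exists>u::'a. \<forall>k. u \<noteq> k *\<^sub>R y"
proof (rule ccontr)
  assume "\<not> ?thesis"
  hence all: "\<forall>u::'a. \<exists>k. u = k *\<^sub>R y" by blast
  obtain u v :: 'a where uv: "u \<noteq> v" "independent {u, v}" using assms dim_gt_one_def by blast
  obtain a where a: "u = a *\<^sub>R y" using all by blast
  obtain b where b: "v = b *\<^sub>R y" using all by blast
  show False
  proof (cases "a = 0")
    case True
    hence "0 \<in> {u,v}" using a by simp
    thus False using uv(2) real_vector.dependent_zero by blast
  next
    case False
    have "v = (b/a) *\<^sub>R u" using a b False by simp
    hence "v \<in> span {u}" by (simp add: span_base span_mul)
    moreover have "{u,v} - {v} = {u}" using uv(1) by auto
    ultimately have "dependent {u,v}" unfolding real_vector.dependent_def by force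
    thus False using uv(2) by blast
  qed
qed

lemma bj_ex:
  fixes y :: "'a::real_normed_vector"
  assumes "norm y = 1" "dim_gt_one TYPE('a)"
  shows "\<exists>w. bj_orth norm y w \<and> norm w = 1"
  using other_vec[OF assms(2), of y] bj_exists[OF assms(1)] by blast

lemma bj_abs:
  fixes x z :: "'a::real_normed_vector"
  assumes "bj_orth norm x z" "norm x = 1"
  shows "\<bar>a\<bar> \<le> norm (a *\<^sub>R x + b *\<^sub>R z)"
proof (cases "a = 0")
  case True then show ?thesis by simp
next
  case False
  have "a *\<^sub>R x + b *\<^sub>R z = a *\<^sub>R (x + (b/a) *\<^sub>R z)" using False by (simp add: algebra_simps)
  hence "norm (a *\<^sub>R x + b *\<^sub>R z) = \<bar>a\<bar> * norm (x + (b/a) *\<^sub>R z)" by simp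
  moreover have "norm (x + (b/a) *\<^sub>R z) \<ge> 1" using assms unfolding bj_orth_def by metis
  ultimately show ?thesis by (metis abs_ge_zero mult_left_mono mult.right_neutral)
qed

lemma shrink_m:
  fixes y w :: "'b::real_normed_vector"
  assumes "norm y = 1" "\<bar>a\<bar> \<le> 1" "norm (a *\<^sub>R y + (b*m0) *\<^sub>R w) \<le> 1" "0 < m" "m \<le> m0"
  shows "norm (a *\<^sub>R y + (b*m) *\<^sub>R w) \<le> 1"
proof -
  define \<theta> where "\<theta> = m/m0"
  have th: "0 < \<theta>" "\<theta> \<le> 1" using assms(4,5) unfolding \<theta>_def by auto
  have eq: "a *\<^sub>R y + (b*m) *\<^sub>R w = (1-\<theta>) *\<^sub>R (a *\<^sub>R y) + \<theta> *\<^sub>R (a *\<^sub>R y + (b*m0) *\<^sub>R w)"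
    using assms(4,5) unfolding \<theta>_def by (simp add: algebra_simps)
  have "norm (a *\<^sub>R y + (b*m) *\<^sub>R w) \<le> norm ((1-\<theta>) *\<^sub>R (a *\<^sub>R y)) + norm (\<theta> *\<^sub>R (a *\<^sub>R y + (b*m0) *\<^sub>R w))"
    unfolding eq by (rule norm_triangle_ineq)
  also have "\<dots> = (1-\<theta>) * \<bar>a\<bar> + \<theta> * norm (a *\<^sub>R y + (b*m0) *\<^sub>R w)" using th assms(1) by (simp add: abs_mult)
  also have "\<dots> \<le> (1-\<theta>) * 1 + \<theta> * 1"
    using th assms(2,3) by (intro add_mono mult_left_mono) auto
  finally show ?thesis by simp
qed

lemma part_v:
  fixes x :: "'a::real_normed_vector" and y :: "'b::real_normed_vector"
  assumes "norm x = 1" "norm y = 1" "0 < r" "r \<le> r0" "0 < m" "m \<le> m0"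
  shows "(weak_cpp_const norm norm x y r0 m0 \<longrightarrow> weak_cpp_const norm norm x y r m) \<and>
         (cpp_const norm norm x y r0 m0 \<longrightarrow> cpp_const norm norm x y r m)"
proof (intro conjI impI)
  assume "weak_cpp_const norm norm x y r0 m0"
  then obtain z w where zw: "bj_orth norm x z" "norm z = 1" "bj_orth norm y w" "norm w = 1"
    and H: "\<forall>a b::real. norm (a *\<^sub>R x + b *\<^sub>R z - x) < r0 \<and> norm (a *\<^sub>R x + b *\<^sub>R z) = 1
            \<longrightarrow> norm (a *\<^sub>R y + (b * m0) *\<^sub>R w) \<le> 1"
    unfolding weak_cpp_const_def by blast
  show "weak_cpp_const norm norm x y r m" unfolding weak_cpp_const_def
  proof (intro conjI exI allI impI)
    fix a b :: real
    assume ab: "norm (a *\<^sub>R x + b *\<^sub>R z - x) < r \<and> norm (a *\<^sub>R x + b *\<^sub>R z) = 1"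
    have "\<bar>a\<bar> \<le> 1" using bj_abs[OF zw(1) assms(1), of a b] ab by simp
    moreover have "norm (a *\<^sub>R y + (b * m0) *\<^sub>R w) \<le> 1" using H ab assms(4) by force
    ultimately show "norm (a *\<^sub>R y + (b * m) *\<^sub>R w) \<le> 1" using shrink_m assms by blast
  qed (use zw assms in auto)
next
  assume C: "cpp_const norm norm x y r0 m0"
  show "cpp_const norm norm x y r m" unfolding cpp_const_def
  proof (intro conjI allI impI)
    fix z w a b
    assume zw: "bj_orth norm x z \<and> norm z = 1 \<and> bj_orth norm y w \<and> norm w = 1"
      and ab: "norm (a *\<^sub>R x + b *\<^sub>R z - x) < r \<and> norm (a *\<^sub>R x + b *\<^sub>R z) = 1"
    have "\<bar>a\<bar> \<le> 1" using bj_abs[of x z a b] zw assms(1) ab by simp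
    moreover have "norm (a *\<^sub>R y + (b * m0) *\<^sub>R w) \<le> 1" using C zw ab assms(4)
      unfolding cpp_const_def by force
    ultimately show "norm (a *\<^sub>R y + (b * m) *\<^sub>R w) \<le> 1" using shrink_m assms by blast
  qed (use assms in auto)
qed

lemma hilb_orth:
  fixes x z :: "'h::real_inner"
  assumes "bj_orth norm x z" "norm x = 1" "norm z = 1"
  shows "inner x z = 0"
proof -
  define c where "c = inner x z"
  have "norm (x + (-c) *\<^sub>R z) \<ge> 1" using assms unfolding bj_orth_def by metis
  hence A1: "(norm (x + (-c) *\<^sub>R z))^2 \<ge> 1" by (metis one_le_power)
  have "inner x x = 1" "inner z z = 1" using assms(2,3)
    by (metis norm_eq_1)+
  moreover have "(norm (x + (-c) *\<^sub>R z))^2 = inner x x - 2*c*inner x z + c^2 * inner z z"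
    unfolding power2_norm_eq_inner
    by (simp add: inner_add_left inner_add_right inner_commute algebra_simps power2_eq_square)
  ultimately have "(norm (x + (-c) *\<^sub>R z))^2 = 1 - c^2" unfolding c_def
    by (simp add: power2_eq_square)
  with A1 have "c^2 \<le> 0" by linarith
  thus ?thesis unfolding c_def by simp
qed

lemma hilb_norm2:
  fixes x z :: "'h::real_inner"
  assumes "inner x z = 0" "norm x = 1" "norm z = 1"
  shows "(norm (a *\<^sub>R x + b *\<^sub>R z))^2 = a^2 + b^2"
proof -
  have "inner x x = 1" "inner z z = 1" "inner z x = 0" using assms
    by (metis norm_eq_1 inner_commute)+
  moreover have "(norm (a *\<^sub>R x + b *\<^sub>R z))^2 = a*a*inner x x + 2*a*b*inner x z + b*b * inner z z"
    unfolding power2_norm_eq_inner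
    by (simp add: inner_add_left inner_add_right inner_commute algebra_simps)
  ultimately show ?thesis using assms(1) by (simp add: power2_eq_square)
qed

lemma part_ii:
  fixes x y :: "'h::real_inner"
  assumes "norm x = 1" "norm y = 1" "r > 0"
  shows "cpp_const norm norm x y r 1"
  unfolding cpp_const_def
proof (intro conjI allI impI)
  fix z w a b
  assume zw: "bj_orth norm x z \<and> norm z = 1 \<and> bj_orth norm y w \<and> norm w = 1"
    and ab: "norm (a *\<^sub>R x + b *\<^sub>R z - x) < r \<and> norm (a *\<^sub>R x + b *\<^sub>R z) = 1"
  have "inner x z = 0" "inner y w = 0" using hilb_orth zw assms by blast+
  hence "(norm (a *\<^sub>R y + (b*1) *\<^sub>R w))^2 = (norm (a *\<^sub>R x + b *\<^sub>R z))^2"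
    using hilb_norm2[of y w a b] hilb_norm2[of x z a b] zw assms by simp
  hence "(norm (a *\<^sub>R y + (b*1) *\<^sub>R w))^2 = 1" using ab by simp
  thus "norm (a *\<^sub>R y + (b*1) *\<^sub>R w) \<le> 1" by (simp add: power2_eq_1_iff) linarith
qed (use assms in auto)

lemma part_iii:
  fixes x :: "'a::real_normed_vector"
  assumes "norm x = 1" "dim_gt_one TYPE('a)"
  shows "weak_cpp norm norm x x"
proof -
  obtain z where z: "bj_orth norm x z" "norm z = 1" using bj_ex assms by blast
  have "weak_cpp_const norm norm x x 1 1" unfolding weak_cpp_const_def
    using z by (intro conjI exI[of _ z]) auto
  thus ?thesis unfolding weak_cpp_def by blast
qed

lemma part_i:
  fixes x :: "'a::real_normed_vector" and y :: "'b::real_normed_vector"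
  assumes "norm x = 1" "norm y = 1" "dim_gt_one TYPE('a)" "dim_gt_one TYPE('b)" "cpp norm norm x y"
  shows "weak_cpp norm norm x y"
proof -
  obtain r m where C: "cpp_const norm norm x y r m" using assms(5) cpp_def by blast
  obtain z where z: "bj_orth norm x z" "norm z = 1" using bj_ex assms by blast
  obtain w where w: "bj_orth norm y w" "norm w = 1" using bj_ex assms by blast
  have "weak_cpp_const norm norm x y r m" using C z w unfolding weak_cpp_const_def cpp_const_def
    by blast
  thus ?thesis unfolding weak_cpp_def by blast
qed

lemma part_vi:
  fixes x :: "'a::real_normed_vector" and y :: "'b::real_normed_vector"
  assumes nx: "norm x = 1" and ny: "norm y = 1" and dimb: "dim_gt_one TYPE('b)"
    and C: "cpp norm norm x y" and nex: "\<not> x extreme_point_of cball 0 1"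
  shows "\<not> y extreme_point_of cball 0 1"
proof -
  have "x \<in> cball 0 1" using nx by simp
  then obtain p q where pq: "p \<in> cball 0 1" "q \<in> cball 0 1" "x \<in> open_segment p q"
    using nex unfolding extreme_point_of_def by blast
  then obtain u where u: "p \<noteq> q" "0 < u" "u < 1" "x = (1 - u) *\<^sub>R p + u *\<^sub>R q"
    unfolding in_segment by blast
  have np: "norm p \<le> 1" and nq: "norm q \<le> 1" using pq by auto
  define d where "d = q - p"
  define \<delta> where "\<delta> = min u (1-u)"
  have dnz: "d \<noteq> 0" using u(1) d_def by simp
  have dpos: "\<delta> > 0" using u unfolding \<delta>_def by simp
  have le1: "norm (x + s *\<^sub>R d) \<le> 1" if s: "\<bar>s\<bar> \<le> \<delta>" for s
  proof -
    have r: "0 \<le> u + s" "u + s \<le> 1" using s u unfolding \<delta>_def by auto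
    have "x + s *\<^sub>R d = (1 - (u+s)) *\<^sub>R p + (u+s) *\<^sub>R q" unfolding u(4) d_def
      by (simp add: algebra_simps)
    hence "norm (x + s *\<^sub>R d) \<le> norm ((1 - (u+s)) *\<^sub>R p) + norm ((u+s) *\<^sub>R q)"
      by (metis norm_triangle_ineq)
    also have "\<dots> = (1 - (u+s)) * norm p + (u+s) * norm q" using r by simp
    also have "\<dots> \<le> (1 - (u+s)) * 1 + (u+s) * 1"
      using r np nq by (intro add_mono mult_left_mono) auto
    finally show ?thesis by simp
  qed
  have eq1: "norm (x + s *\<^sub>R d) = 1" if s: "\<bar>s\<bar> \<le> \<delta>" for s
  proof -
    have "2 = norm (2 *\<^sub>R x)" using nx by simp
    also have "2 *\<^sub>R x = (x + s *\<^sub>R d) + (x + (-s) *\<^sub>R d)" by (simp add: algebra_simps scaleR_2)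
    finally have "2 \<le> norm (x + s *\<^sub>R d) + norm (x + (-s) *\<^sub>R d)" by (metis norm_triangle_ineq)
    moreover have "norm (x + (-s) *\<^sub>R d) \<le> 1" using le1[of "-s"] s by simp
    ultimately show ?thesis using le1[OF s] by linarith
  qed
  have bjd: "norm (x + l *\<^sub>R d) \<ge> 1" for l
  proof (cases "\<bar>l\<bar> \<le> \<delta>")
    case True then show ?thesis using eq1 by simp
  next
    case False
    define \<theta> where "\<theta> = \<delta> / \<bar>l\<bar>"
    have lpos: "\<bar>l\<bar> > 0" using False dpos by linarith
    have th: "0 < \<theta>" "\<theta> \<le> 1" using False dpos lpos unfolding \<theta>_def by (auto simp: divide_simps)
    have "\<bar>\<theta> * l\<bar> = \<delta>" using lpos dpos unfolding \<theta>_def by (simp add: abs_mult)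
    hence "1 = norm (x + (\<theta>*l) *\<^sub>R d)" using eq1 by simp
    also have "x + (\<theta>*l) *\<^sub>R d = (1-\<theta>) *\<^sub>R x + \<theta> *\<^sub>R (x + l *\<^sub>R d)" by (simp add: algebra_simps)
    finally have "1 \<le> norm ((1-\<theta>) *\<^sub>R x) + norm (\<theta> *\<^sub>R (x + l *\<^sub>R d))" by (metis norm_triangle_ineq)
    hence "1 \<le> (1-\<theta>) + \<theta> * norm (x + l *\<^sub>R d)" using th nx by simp
    hence "\<theta> * 1 \<le> \<theta> * norm (x + l *\<^sub>R d)" by (simp add: algebra_simps)
    thus ?thesis using th by (simp add: mult_le_cancel_left_pos)
  qed
  define z where "z = (1 / norm d) *\<^sub>R d"
  have nz: "norm z = 1" using dnz z_def by simp
  have bjz: "bj_orth norm x z" unfolding bj_orth_def z_def nx using bjd by (simp add: scaleR_scaleR)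
  obtain r m where rm: "cpp_const norm norm x y r m" using C cpp_def by blast
  obtain w where w: "bj_orth norm y w" "norm w = 1" using bj_ex[OF ny dimb] by blast
  have r0: "r > 0" "m > 0" using rm unfolding cpp_const_def by auto
  define b where "b = min r (\<delta> * norm d) / 2"
  have "\<delta> * norm d > 0" using dpos dnz by simp
  hence bpos: "b > 0" using r0 unfolding b_def by simp
  have key: "norm (y + (c * m) *\<^sub>R w) \<le> 1" if c: "\<bar>c\<bar> = b" for c
  proof -
    have "norm (1 *\<^sub>R x + c *\<^sub>R z - x) = b" using c nz by simp
    hence A: "norm (1 *\<^sub>R x + c *\<^sub>R z - x) < r" using bpos unfolding b_def by linarith
    have "\<bar>c / norm d\<bar> \<le> \<delta>" using c dnz dpos unfolding b_def
      by (simp add: divide_simps abs_div)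
    hence "norm (x + (c / norm d) *\<^sub>R d) = 1" using eq1 by blast
    hence B: "norm (1 *\<^sub>R x + c *\<^sub>R z) = 1" unfolding z_def by (simp add: scaleR_scaleR)
    have "norm (1 *\<^sub>R y + (c * m) *\<^sub>R w) \<le> 1"
      using rm bjz nz w A B unfolding cpp_const_def by blast
    thus ?thesis by simp
  qed
  define t where "t = b * m"
  have tpos: "t > 0" using bpos r0 t_def by simp
  have y1: "norm (y + t *\<^sub>R w) \<le> 1" using key[of b] bpos t_def by simp
  have y2: "norm (y - t *\<^sub>R w) \<le> 1" using key[of "-b"] bpos t_def by simp
  have dd: "(y + t *\<^sub>R w) - (y - t *\<^sub>R w) = (t+t) *\<^sub>R w" by (simp only: scaleR_left_distrib diff_add_eq_diff_diff_swap add_diff_cancel_left) (simp add: algebra_simps)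
  have "norm ((t+t) *\<^sub>R w) = 2*t" using tpos w(2) by simp
  hence ne: "y - t *\<^sub>R w \<noteq> y + t *\<^sub>R w" using tpos dd by force
  have "y = (1 - 1/2) *\<^sub>R (y - t *\<^sub>R w) + (1/2) *\<^sub>R (y + t *\<^sub>R w)" by (simp add: algebra_simps flip: scaleR_left_distrib)
  hence "y \<in> open_segment (y - t *\<^sub>R w) (y + t *\<^sub>R w)" unfolding in_segment using ne
    by (intro conjI exI[of _ "1/2"]) auto
  moreover have "y - t *\<^sub>R w \<in> cball 0 1" "y + t *\<^sub>R w \<in> cball 0 1" using y1 y2 by auto
  ultimately show ?thesis unfolding extreme_point_of_def by blast
qed

lemma l2n: "linf2_norm (a, b) = max \<bar>a\<bar> \<bar>b\<bar>" by (simp add: linf2_norm_def)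

lemma test1: "linf2_norm (a *\<^sub>R (1::real, 1::real) + b *\<^sub>R (-1, 0) - (1,1)) = max \<bar>a - b - 1\<bar> \<bar>a - 1\<bar>"
  by (simp add: l2n)


lemma L1: "weak_cpp linf2_norm linf2_norm (1::real, 1::real) (1, -1)"
proof -
  have "weak_cpp_const linf2_norm linf2_norm (1::real, 1::real) (1, -1) 1 1"
    unfolding weak_cpp_const_def bj_orth_def
    by (intro conjI exI[of _ "(-1, 0)"]) (auto simp: l2n)
  thus ?thesis unfolding weak_cpp_def by blast
qed

lemma notcpp_aux:
  assumes "s = 1 \<or> s = -1"
  shows "\<not> cpp linf2_norm linf2_norm (1::real, 1::real) (1, s)"
proof
  assume "cpp linf2_norm linf2_norm (1::real, 1::real) (1, s)"
  then obtain r m where C: "cpp_const linf2_norm linf2_norm (1::real, 1::real) (1, s) r m"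
    unfolding cpp_def by blast
  have rm: "r > 0" "m > 0" using C unfolding cpp_const_def by auto
  have bz: "bj_orth linf2_norm (1::real, 1::real) (-1, 0)" unfolding bj_orth_def by (auto simp: l2n)
  have bw: "bj_orth linf2_norm (1::real, s) (1, 0)" unfolding bj_orth_def using assms by (auto simp: l2n)
  define b where "b = min r 1 / 2"
  have b: "0 < b" "b < r" "b \<le> 1/2" using rm unfolding b_def by auto
  have A: "linf2_norm (1 *\<^sub>R (1::real, 1::real) + b *\<^sub>R (-1, 0) - (1,1)) < r" using b by (simp add: l2n)
  have B: "linf2_norm (1 *\<^sub>R (1::real, 1::real) + b *\<^sub>R (-1, 0)) = 1" using b by (simp add: l2n)
  have n1: "linf2_norm (-1::real, 0::real) = 1" "linf2_norm (1::real, 0::real) = 1" by (auto simp: l2n)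
  have "linf2_norm (1 *\<^sub>R (1::real, s) + (b * m) *\<^sub>R (1, 0)) \<le> 1"
    using C bz bw A B n1 unfolding cpp_const_def by blast
  moreover have "b * m > 0" using b rm by simp
  ultimately show False by (simp add: l2n)
qed

lemma bj10:
  assumes "bj_orth linf2_norm (1::real, 0::real) z" "linf2_norm z = 1"
  shows "fst z = 0"
proof (rule ccontr)
  obtain z1 z2 where zz: "z = (z1, z2)" by (cases z)
  assume "fst z \<noteq> 0"
  hence z1: "z1 \<noteq> 0" using zz by simp
  have a1: "\<bar>z1\<bar> \<le> 1" "\<bar>z2\<bar> \<le> 1" using assms(2) zz by (auto simp: l2n)
  have "z1 * z1 > 0" using z1 by (metis not_real_square_gt_zero)
  moreover have "z1 * z1 \<le> 1" using a1 by (metis abs_le_square_iff abs_one one_power2 power2_eq_square)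
  moreover have "\<bar>z1 * z2\<bar> \<le> 1" using a1 by (simp add: abs_mult mult_le_one)
  moreover have "linf2_norm ((1,0) + (-z1/2) *\<^sub>R z) \<ge> linf2_norm (1::real,0::real)"
    using assms(1) unfolding bj_orth_def by blast
  hence "max \<bar>1 - z1*z1/2\<bar> \<bar>z1*z2/2\<bar> \<ge> 1" using zz by (simp add: l2n)
  ultimately show False by (simp add: abs_mult max_def split: if_splits abs_split)
qed


lemma L4: "weak_cpp linf2_norm linf2_norm (1::real, 0::real) (1, 1/2)"
proof -
  have "weak_cpp_const linf2_norm linf2_norm (1::real, 0::real) (1, 1/2) (1/2) 1"
    unfolding weak_cpp_const_def bj_orth_def
  proof (intro conjI exI[of _ "(0, 1)"] allI impI)
    fix a b :: real
    assume "linf2_norm (a *\<^sub>R (1::real, 0::real) + b *\<^sub>R (0, 1) - (1, 0)) < 1/2 \<and>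
       linf2_norm (a *\<^sub>R (1::real, 0::real) + b *\<^sub>R (0, 1)) = 1"
    hence h0: "max \<bar>a - 1\<bar> \<bar>b\<bar> < 1/2" "max \<bar>a\<bar> \<bar>b\<bar> = 1"
      by (simp_all add: l2n del: max_less_iff_conj)
    have h: "\<bar>a - 1\<bar> < 1/2" "\<bar>b\<bar> < 1/2" "max \<bar>a\<bar> \<bar>b\<bar> = 1"
      using h0 by (simp_all only: max_less_iff_conj)
    hence "a = 1" by (auto simp: max_def split: if_splits abs_split)
    thus "linf2_norm (a *\<^sub>R (1::real, 1/2::real) + (b * 1) *\<^sub>R (0, 1)) \<le> 1"
      using h by (auto simp: l2n)
  qed (auto simp: l2n)
  thus ?thesis unfolding weak_cpp_def by blast
qed

lemma L5: "\<not> weak_cpp linf2_norm linf2_norm (1::real, 0::real) (1, 1)"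
proof
  assume "weak_cpp linf2_norm linf2_norm (1::real, 0::real) (1, 1)"
  then obtain r m z w where rm: "r > 0" "m > 0" and zw: "bj_orth linf2_norm (1::real, 0::real) z"
    "linf2_norm z = 1" "bj_orth linf2_norm (1::real, 1::real) w" "linf2_norm w = 1"
    and H: "\<forall>a b::real. linf2_norm (a *\<^sub>R (1::real, 0::real) + b *\<^sub>R z - (1,0)) < r \<and>
              linf2_norm (a *\<^sub>R (1::real, 0::real) + b *\<^sub>R z) = 1
            \<longrightarrow> linf2_norm (a *\<^sub>R (1::real, 1::real) + (b * m) *\<^sub>R w) \<le> 1"
    unfolding weak_cpp_def weak_cpp_const_def by blast
  obtain z1 z2 where zz: "z = (z1, z2)" by (cases z)
  obtain w1 w2 where ww: "w = (w1, w2)" by (cases w)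
  have z1: "z1 = 0" using bj10[OF zw(1,2)] zz by simp
  have z2: "\<bar>z2\<bar> \<le> 1" using zw(2) zz by (simp add: l2n)
  have w12: "max \<bar>w1\<bar> \<bar>w2\<bar> = 1" using zw(4) ww by (simp add: l2n)
  define t where "t = min r 1 / 2"
  have t: "0 < t" "t < r" "t \<le> 1/2" using rm unfolding t_def by auto
  define b where "b = (if w1 \<noteq> 0 then t * w1 else t * w2)"
  have bb: "\<bar>b\<bar> \<le> t"
  proof -
    have "\<bar>w1\<bar> \<le> 1" "\<bar>w2\<bar> \<le> 1" using w12 by auto
    thus ?thesis unfolding b_def using t by (auto simp: abs_mult mult_le_cancel_left1 intro: mult_left_le)
  qed
  have bz: "\<bar>b * z2\<bar> \<le> t" using bb z2 t
    by (metis abs_ge_zero abs_mult mult_left_le order_trans)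
  have "linf2_norm (1 *\<^sub>R (1::real, 0::real) + b *\<^sub>R z - (1,0)) < r"
    using bz t zz z1 by (simp add: l2n)
  moreover have "linf2_norm (1 *\<^sub>R (1::real, 0::real) + b *\<^sub>R z) = 1"
    using bz t zz z1 by (simp add: l2n)
  ultimately have "linf2_norm (1 *\<^sub>R (1::real, 1::real) + (b * m) *\<^sub>R w) \<le> 1" using H by blast
  hence le: "\<bar>1 + b*m*w1\<bar> \<le> 1" "\<bar>1 + b*m*w2\<bar> \<le> 1" using ww by (auto simp: l2n)
  show False
  proof (cases "w1 = 0")
    case False
    have "b = t * w1" using False unfolding b_def by simp
    hence "b*m*w1 = t*m*(w1*w1)" by (simp add: algebra_simps)
    moreover have "w1 * w1 > 0" using False by (metis not_real_square_gt_zero)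
    moreover have "t*m*(w1*w1) > 0" using mult_pos_pos[OF mult_pos_pos[OF t(1) rm(2)] \<open>w1 * w1 > 0\<close>] .
    ultimately have "b*m*w1 > 0" by linarith
    thus False using le(1) by simp
  next
    case True
    hence "\<bar>w2\<bar> = 1" using w12 by simp
    hence "w2 * w2 = 1" by (metis abs_mult_self_eq mult_1)
    hence "b*m*w2 = t*m" using True b_def by (simp add: algebra_simps)
    moreover have "t*m > 0" using t rm by simp
    ultimately have "b*m*w2 > 0" by linarith
    thus False using le(2) by simp
  qed
qed


lemma bj11:
  assumes "bj_orth linf2_norm (1::real, 1::real) z" "linf2_norm z = 1"
  shows "fst z * snd z \<le> 0"
proof (rule ccontr)
  obtain z1 z2 where zz: "z = (z1, z2)" by (cases z)
  assume "\<not> fst z * snd z \<le> 0"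
  hence "z1 * z2 > 0" using zz by simp
  hence sg: "(z1 > 0 \<and> z2 > 0) \<or> (z1 < 0 \<and> z2 < 0)" by (simp add: zero_less_mult_iff)
  have a1: "\<bar>z1\<bar> \<le> 1" "\<bar>z2\<bar> \<le> 1" using assms(2) zz by (auto simp: l2n)
  have A: "linf2_norm ((1,1) + (-1/2) *\<^sub>R z) \<ge> linf2_norm (1::real,1::real)"
    "linf2_norm ((1,1) + (1/2) *\<^sub>R z) \<ge> linf2_norm (1::real,1::real)"
    using assms(1) unfolding bj_orth_def by blast+
  hence "max \<bar>1 - z1/2\<bar> \<bar>1 - z2/2\<bar> \<ge> 1" "max \<bar>1 + z1/2\<bar> \<bar>1 + z2/2\<bar> \<ge> 1"
    using zz by (simp_all add: l2n)
  thus False using sg a1 by (auto simp: max_def split: if_splits abs_split)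
qed

lemma L6: "cpp linf2_norm linf2_norm (1::real, 1::real) (1, 0)"
proof -
  have "cpp_const linf2_norm linf2_norm (1::real, 1::real) (1, 0) (1/2) 1"
    unfolding cpp_const_def
  proof (intro conjI allI impI)
    fix z w :: "real \<times> real" and a b :: real
    assume zw: "bj_orth linf2_norm (1::real, 1::real) z \<and> linf2_norm z = 1 \<and>
      bj_orth linf2_norm (1::real, 0::real) w \<and> linf2_norm w = 1"
      and ab: "linf2_norm (a *\<^sub>R (1::real, 1::real) + b *\<^sub>R z - (1, 1)) < 1/2 \<and>
       linf2_norm (a *\<^sub>R (1::real, 1::real) + b *\<^sub>R z) = 1"
    obtain z1 z2 where zz: "z = (z1, z2)" by (cases z)
    obtain w1 w2 where ww: "w = (w1, w2)" by (cases w)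
    have w1: "w1 = 0" using bj10[of w] zw ww by simp
    have w2: "\<bar>w2\<bar> = 1" using zw ww w1 by (simp add: l2n)
    have zp: "z1 * z2 \<le> 0" using bj11[of z] zw zz by simp
    have zm: "max \<bar>z1\<bar> \<bar>z2\<bar> = 1" using zw zz by (simp add: l2n)
    define p where "p = b * z1"
    define q where "q = b * z2"
    have pq: "p * q \<le> 0" unfolding p_def q_def
      using mult_nonneg_nonpos[of "b*b" "z1*z2"] zp by (simp add: algebra_simps)
    have h0: "max \<bar>a + p - 1\<bar> \<bar>a + q - 1\<bar> < 1/2" "max \<bar>a + p\<bar> \<bar>a + q\<bar> = 1"
      using ab zz unfolding p_def q_def by (simp_all add: l2n algebra_simps del: max_less_iff_conj)
    have h: "\<bar>a + p - 1\<bar> < 1/2" "\<bar>a + q - 1\<bar> < 1/2" "\<bar>a + p\<bar> \<le> 1" "\<bar>a + q\<bar> \<le> 1"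
      using h0 by (simp_all only: max_less_iff_conj)
    have sg: "(p \<ge> 0 \<and> q \<le> 0) \<or> (p \<le> 0 \<and> q \<ge> 0)" using pq by (simp add: mult_le_0_iff)
    have aa: "\<bar>a\<bar> \<le> 1" using sg h by linarith
    have pq1: "\<bar>p\<bar> \<le> 1" "\<bar>q\<bar> \<le> 1" using sg h by linarith+
    have bb: "\<bar>b\<bar> \<le> 1"
    proof (cases "\<bar>z1\<bar> = 1")
      case True then show ?thesis using pq1 unfolding p_def by (simp add: abs_mult)
    next
      case False
      hence "\<bar>z2\<bar> = 1" using zm by (auto simp: max_def split: if_splits)
      then show ?thesis using pq1 unfolding q_def by (simp add: abs_mult)
    qed
    show "linf2_norm (a *\<^sub>R (1::real, 0::real) + (b * 1) *\<^sub>R w) \<le> 1"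
      using aa bb ww w1 w2 by (simp add: l2n abs_mult)
  qed auto
  thus ?thesis unfolding cpp_def by blast
qed

lemma ext1: "\<not> (1::real, 0::real) extreme_point_of {p. linf2_norm p \<le> 1}"
proof -
  have "(1::real, 0::real) \<in> open_segment (1, -1) (1, 1)" unfolding in_segment
    by (intro conjI exI[of _ "1/2"]) auto
  moreover have "(1::real, -1::real) \<in> {p. linf2_norm p \<le> 1}" "(1::real, 1::real) \<in> {p. linf2_norm p \<le> 1}"
    by (auto simp: l2n)
  ultimately show ?thesis unfolding extreme_point_of_def by blast
qed

lemma ext2: "(1::real, 1::real) extreme_point_of {p. linf2_norm p \<le> 1}"
  unfolding extreme_point_of_def
proof (intro conjI ballI)
  show "(1::real, 1::real) \<in> {p. linf2_norm p \<le> 1}" by (simp add: l2n)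
next
  fix a b :: "real \<times> real"
  assume a: "a \<in> {p. linf2_norm p \<le> 1}" and b: "b \<in> {p. linf2_norm p \<le> 1}"
  obtain a1 a2 where aa: "a = (a1, a2)" by (cases a)
  obtain b1 b2 where bb: "b = (b1, b2)" by (cases b)
  have la: "a1 \<le> 1" "a2 \<le> 1" "b1 \<le> 1" "b2 \<le> 1" using a b aa bb by (auto simp: l2n)
  show "(1, 1) \<notin> open_segment a b"
  proof
    assume "(1, 1) \<in> open_segment a b"
    then obtain u where u: "a \<noteq> b" "0 < u" "u < 1" "(1, 1) = (1 - u) *\<^sub>R a + u *\<^sub>R b"
      unfolding in_segment by blast
    have e1: "(1 - u) * (1 - a1) + u * (1 - b1) = 0" and e2: "(1 - u) * (1 - a2) + u * (1 - b2) = 0"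
      using u(4) aa bb by (simp_all add: algebra_simps)
    have n: "(1 - u) * (1 - a1) \<ge> 0" "u * (1 - b1) \<ge> 0" "(1 - u) * (1 - a2) \<ge> 0" "u * (1 - b2) \<ge> 0"
      using u la by simp_all
    hence "(1 - u) * (1 - a1) = 0" "u * (1 - b1) = 0" "(1 - u) * (1 - a2) = 0" "u * (1 - b2) = 0"
      using e1 e2 by linarith+
    hence "a1 = 1" "b1 = 1" "a2 = 1" "b2 = 1" using u by simp_all
    thus False using u(1) aa bb by simp
  qed
qed

theorem mainTheorem1:
  fixes dummyX :: "'a::banach" and dummyY :: "'b::banach"
    and dummyH :: "'h::{real_inner, complete_space}"
  assumes "dim_gt_one TYPE('a)" and "dim_gt_one TYPE('b)" and "dim_gt_one TYPE('h)"
  shows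
    \<comment> \<open>(i)\<close>
    "(\<forall>(x::'a) (y::'b). norm x = 1 \<and> norm y = 1 \<and> cpp norm norm x y \<longrightarrow> weak_cpp norm norm x y)
     \<and> weak_cpp linf2_norm linf2_norm (1, 1) (1, -1)
     \<and> \<not> cpp linf2_norm linf2_norm (1, 1) (1, -1)
     \<comment> \<open>(ii)\<close>
     \<and> (\<forall>(x::'h) (y::'h). norm x = 1 \<and> norm y = 1 \<longrightarrow>
          cpp norm norm x y \<and> (\<forall>r>0. cpp_const norm norm x y r 1))
     \<comment> \<open>(iii)\<close>
     \<and> (\<forall>x :: 'a. norm x = 1 \<longrightarrow> weak_cpp norm norm x x)
     \<and> \<not> cpp linf2_norm linf2_norm (1, 1) (1, 1)
     \<comment> \<open>(iv)\<close>
     \<and> weak_cpp linf2_norm linf2_norm (1, 0) (1, 1/2)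
     \<and> \<not> weak_cpp linf2_norm linf2_norm (1, 0) (1, 1)
     \<comment> \<open>(v)\<close>
     \<and> (\<forall>(x::'a) (y::'b) r0 m0 r m. norm x = 1 \<and> norm y = 1 \<and>
          0 < r \<and> r \<le> r0 \<and> 0 < m \<and> m \<le> m0 \<longrightarrow>
          (weak_cpp_const norm norm x y r0 m0 \<longrightarrow> weak_cpp_const norm norm x y r m) \<and>
          (cpp_const norm norm x y r0 m0 \<longrightarrow> cpp_const norm norm x y r m))
     \<comment> \<open>(vi)\<close>
     \<and> (\<forall>(x::'a) (y::'b). norm x = 1 \<and> norm y = 1 \<and> cpp norm norm x y \<and>
          \<not> x extreme_point_of cball 0 1 \<longrightarrow> \<not> y extreme_point_of cball 0 1)
     \<and> cpp linf2_norm linf2_norm (1, 1) (1, 0)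
     \<and> \<not> (1, 0) extreme_point_of {p. linf2_norm p \<le> 1}
     \<and> (1, 1) extreme_point_of {p. linf2_norm p \<le> 1}"
proof (intro conjI allI impI)
  fix x :: 'a and y :: 'b
  assume "norm x = 1 \<and> norm y = 1 \<and> cpp norm norm x y"
  thus "weak_cpp norm norm x y" using part_i assms by blast
next
  show "weak_cpp linf2_norm linf2_norm (1, 1) (1, -1)" by (rule L1)
next
  show "\<not> cpp linf2_norm linf2_norm (1, 1) (1, -1)" using notcpp_aux by simp
next
  fix x y :: 'h
  assume h: "norm x = 1 \<and> norm y = 1"
  thus "cpp norm norm x y" using part_ii[of x y 1] unfolding cpp_def by auto
  fix r :: real assume "r > 0"
  thus "cpp_const norm norm x y r 1" using part_ii h by blast
next
  fix x :: 'a assume "norm x = 1"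
  thus "weak_cpp norm norm x x" using part_iii assms by blast
next
  show "\<not> cpp linf2_norm linf2_norm (1, 1) (1, 1)" using notcpp_aux by simp
next
  show "weak_cpp linf2_norm linf2_norm (1, 0) (1, 1/2)" by (rule L4)
next
  show "\<not> weak_cpp linf2_norm linf2_norm (1, 0) (1, 1)" by (rule L5)
next
  fix x :: 'a and y :: 'b and r0 m0 r m :: real
  assume "norm x = 1 \<and> norm y = 1 \<and> 0 < r \<and> r \<le> r0 \<and> 0 < m \<and> m \<le> m0"
  hence H: "(weak_cpp_const norm norm x y r0 m0 \<longrightarrow> weak_cpp_const norm norm x y r m) \<and>
         (cpp_const norm norm x y r0 m0 \<longrightarrow> cpp_const norm norm x y r m)" using part_v by blast
  { assume "weak_cpp_const norm norm x y r0 m0" thus "weak_cpp_const norm norm x y r m" using H by blast }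
  { assume "cpp_const norm norm x y r0 m0" thus "cpp_const norm norm x y r m" using H by blast }
next
  fix x :: 'a and y :: 'b
  assume "norm x = 1 \<and> norm y = 1 \<and> cpp norm norm x y \<and> \<not> x extreme_point_of cball 0 1"
  thus "\<not> y extreme_point_of cball 0 1" using part_vi assms by blast
next
  show "cpp linf2_norm linf2_norm (1, 1) (1, 0)" by (rule L6)
next
  show "\<not> (1, 0) extreme_point_of {p. linf2_norm p \<le> 1}" by (rule ext1)
next
  show "(1, 1) extreme_point_of {p. linf2_norm p \<le> 1}" by (rule ext2)
qed

end
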